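(* For every $k\geq 2$, there exists a pair of $2k$-regular graphs that are cospectral with respect to the adjacency matrix and have different zero forcing numbers.
   Context: Graphs are finite, simple, undirected. The zero forcing number $Z(G)$ is the minimum size of a set $S\subseteq V(G)$ such that, if the vertices of $S$ are colored blue and all others white, repeated application of the rule "a blue vertex with exactly one white neighbor forces that neighbor to become blue" eventually makes every vertex blue. *)

theory Defs
  imports "Jordan_Normal_Form.Char_Poly"
begin

definition simple_graph :: "nat \<Rightarrow> (nat \<Rightarrow> nat \<Rightarrow> bool) \<Rightarrow> bool" where
  "simple_graph n E \<longleftrightarrow>
     (\<forall>u v. E u v \<longrightarrow> u < n \<and> v < n) \<and> (\<forall>u v. E u v \<longrightarrow> E v u) \<and> (\<forall>u. \<not> E u u)"

definition regular :: "nat \<Rightarrow> (nat \<Rightarrow> nat \<Rightarrow> bool) \<Rightarrow> nat \<Rightarrow> bool" where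
  "regular n E d \<longleftrightarrow> (\<forall>v<n. card {u. u < n \<and> E v u} = d)"

definition adj_matrix :: "nat \<Rightarrow> (nat \<Rightarrow> nat \<Rightarrow> bool) \<Rightarrow> real mat" where
  "adj_matrix n E = mat n n (\<lambda>(i, j). if E i j then 1 else 0)"

text \<open>Cospectral: adjacency matrices have the same characteristic polynomial
  (same eigenvalues with multiplicities; in particular same order).\<close>
definition cospectral ::
  "nat \<Rightarrow> (nat \<Rightarrow> nat \<Rightarrow> bool) \<Rightarrow> nat \<Rightarrow> (nat \<Rightarrow> nat \<Rightarrow> bool) \<Rightarrow> bool" where
  "cospectral n E m F \<longleftrightarrow> char_poly (adj_matrix n E) = char_poly (adj_matrix m F)"

inductive blue :: "nat \<Rightarrow> (nat \<Rightarrow> nat \<Rightarrow> bool) \<Rightarrow> nat set \<Rightarrow> nat \<Rightarrow> bool"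
  for n E S where
  init: "v \<in> S \<Longrightarrow> blue n E S v"
| force: "\<lbrakk> u < n; v < n; blue n E S u; E u v;
           \<forall>w. w < n \<and> E u w \<and> w \<noteq> v \<longrightarrow> blue n E S w \<rbrakk> \<Longrightarrow> blue n E S v"

definition zero_forcing_set :: "nat \<Rightarrow> (nat \<Rightarrow> nat \<Rightarrow> bool) \<Rightarrow> nat set \<Rightarrow> bool" where
  "zero_forcing_set n E S \<longleftrightarrow> S \<subseteq> {..<n} \<and> (\<forall>v<n. blue n E S v)"

definition zero_forcing_number :: "nat \<Rightarrow> (nat \<Rightarrow> nat \<Rightarrow> bool) \<Rightarrow> nat" where
  "zero_forcing_number n E = (LEAST k. \<exists>S. zero_forcing_set n E S \<and> card S = k)"

end

theory Submission
  imports Defs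
begin


definition nbok :: "nat \<Rightarrow> (nat \<Rightarrow> nat list) \<Rightarrow> bool" where
  "nbok n0 nb \<longleftrightarrow> (\<forall>u<n0. distinct (nb u) \<and> length (nb u) = 5 \<and>
      (\<forall>v\<in>set (nb u). v < n0 \<and> v \<noteq> u \<and> u \<in> set (nb v)))"

definition Hx :: "nat \<Rightarrow> (nat \<Rightarrow> nat list) \<Rightarrow> nat \<Rightarrow> nat \<Rightarrow> nat \<Rightarrow> bool" where
  "Hx n0 nb n u v \<longleftrightarrow> (u < n0 \<and> v \<in> set (nb u)) \<or>
     (n0 \<le> u \<and> n0 \<le> v \<and> u < n \<and> v < n \<and> u \<noteq> v \<and> (u - n0) div 6 = (v - n0) div 6)"

definition Gx :: "nat \<Rightarrow> (nat \<Rightarrow> nat list) \<Rightarrow> nat \<Rightarrow> nat \<Rightarrow> nat \<Rightarrow> bool" where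
  "Gx n0 nb n u v \<longleftrightarrow> u < n \<and> v < n \<and> u \<noteq> v \<and> \<not> Hx n0 nb n u v"

lemma div6_iff: "((a::nat) div 6 = q) = (6*q \<le> a \<and> a < 6*q+6)"
proof
  assume "a div 6 = q"
  thus "6*q \<le> a \<and> a < 6*q+6"
    using div_times_less_eq_dividend[of a 6] dividend_less_times_div[of 6 a] by auto
next
  assume "6*q \<le> a \<and> a < 6*q+6"
  thus "a div 6 = q" by (intro div_nat_eqI) auto
qed

definition goodchk :: "nat \<Rightarrow> (nat \<Rightarrow> nat list) \<Rightarrow> bool" where
  "goodchk n0 nb \<longleftrightarrow> (\<forall>u<n0. \<forall>x<n0. u \<noteq> x \<longrightarrow> x \<notin> set (nb u) \<longrightarrow>
     (\<forall>y\<in>set (nb u). y \<notin> set (nb x) \<longrightarrow> (\<exists>y2\<in>set (nb u). y2 \<noteq> y \<and> y2 \<notin> set (nb x))))"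

locale frame =
  fixes n0 n :: nat
  assumes n0n: "n0 \<le> n" and dvd6: "6 dvd (n - n0)" and n0ge: "10 \<le> n0"
begin

lemma block_bound:
  assumes "n0 \<le> u" "u < n"
  shows "n0 + 6 * ((u - n0) div 6) + 6 \<le> n"
proof -
  obtain m where m: "n - n0 = 6 * m" using dvd6 by auto
  have "u - n0 < 6 * m" using assms m n0n by linarith
  hence "(u - n0) div 6 < m" by auto
  thus ?thesis using m n0n by linarith
qed

lemma block_iff:
  assumes "n0 \<le> u"
  shows "(n0 \<le> v \<and> (u - n0) div 6 = (v - n0) div 6) \<longleftrightarrow>
     (n0 + 6 * ((u - n0) div 6) \<le> v \<and> v < n0 + 6 * ((u - n0) div 6) + 6)"
proof (cases "n0 \<le> v")
  case True
  then show ?thesis using div6_iff[of "v - n0" "(u - n0) div 6"] by linarith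
qed (use assms in auto)

context
  fixes nb assumes ok: "nbok n0 nb"
begin

lemma nb_lt: "u < n0 \<Longrightarrow> v \<in> set (nb u) \<Longrightarrow> v < n0"
  using ok unfolding nbok_def by blast

lemma H_lt: "Hx n0 nb n u v \<Longrightarrow> u < n \<and> v < n"
  using nb_lt n0n unfolding Hx_def by fastforce

lemma H_sym: "Hx n0 nb n u v \<Longrightarrow> Hx n0 nb n v u"
proof -
  have "\<forall>u<n0. \<forall>v\<in>set (nb u). v < n0 \<and> u \<in> set (nb v)" using ok unfolding nbok_def by blast
  thus "Hx n0 nb n u v \<Longrightarrow> Hx n0 nb n v u" unfolding Hx_def by auto
qed

lemma H_irrefl: "\<not> Hx n0 nb n u u"
  using ok unfolding Hx_def nbok_def by auto

lemma H_set:
  assumes "u < n"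
  shows "card {v. Hx n0 nb n u v} = 5"
proof (cases "u < n0")
  case True
  hence "{v. Hx n0 nb n u v} = set (nb u)" unfolding Hx_def by auto
  thus ?thesis using ok True unfolding nbok_def by (simp add: distinct_card)
next
  case False
  define b where "b = n0 + 6 * ((u - n0) div 6)"
  have bb: "b + 6 \<le> n" using block_bound[of u] False assms b_def by auto
  have ub: "b \<le> u \<and> u < b + 6" using block_iff[of u u] False b_def by auto
  have "Hx n0 nb n u v \<longleftrightarrow> v \<in> {b..<b+6} - {u}" for v
  proof -
    have "Hx n0 nb n u v \<longleftrightarrow> (n0 \<le> v \<and> (u - n0) div 6 = (v - n0) div 6) \<and> v < n \<and> u \<noteq> v"
      using assms False unfolding Hx_def by auto
    also have "\<dots> \<longleftrightarrow> (b \<le> v \<and> v < b + 6) \<and> v < n \<and> u \<noteq> v"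
      using block_iff[of u v] False unfolding b_def by simp
    also have "\<dots> \<longleftrightarrow> v \<in> {b..<b+6} - {u}" using bb by auto
    finally show ?thesis .
  qed
  hence "{v. Hx n0 nb n u v} = {b..<b+6} - {u}" by blast
  thus ?thesis using ub by simp
qed

lemma G_set:
  assumes "u < n"
  shows "{v. v < n \<and> Gx n0 nb n u v} = {..<n} - insert u {v. Hx n0 nb n u v}"
  unfolding Gx_def using assms H_lt by auto

lemma G_card:
  assumes "u < n"
  shows "card {v. v < n \<and> Gx n0 nb n u v} = n - 6"
proof -
  have f: "finite {v. Hx n0 nb n u v}" by (rule finite_subset[of _ "{..<n}"]) (auto dest: H_lt)
  have s: "insert u {v. Hx n0 nb n u v} \<subseteq> {..<n}" using assms H_lt by auto
  have c: "card (insert u {v. Hx n0 nb n u v}) = 6" using H_set[OF assms] f H_irrefl by simp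
  show ?thesis unfolding G_set[OF assms] using card_Diff_subset[OF _ s] f c by simp
qed

lemma simple_G: "simple_graph n (Gx n0 nb n)"
  unfolding simple_graph_def Gx_def using H_sym by blast

lemma regular_G: "regular n (Gx n0 nb n) (n - 6)"
  unfolding regular_def using G_card by auto


lemma H_block:
  assumes "n0 \<le> u" "u < n"
  shows "Hx n0 nb n u v \<longleftrightarrow> v \<in> {n0 + 6 * ((u - n0) div 6)..<n0 + 6 * ((u - n0) div 6)+6} - {u}"
proof -
  define b where "b = n0 + 6 * ((u - n0) div 6)"
  have bb: "b + 6 \<le> n" using block_bound[of u] assms b_def by auto
  have "Hx n0 nb n u v \<longleftrightarrow> (n0 \<le> v \<and> (u - n0) div 6 = (v - n0) div 6) \<and> v < n \<and> u \<noteq> v"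
    using assms unfolding Hx_def by auto
  also have "\<dots> \<longleftrightarrow> (b \<le> v \<and> v < b + 6) \<and> v < n \<and> u \<noteq> v"
    using block_iff[of u v] assms unfolding b_def by simp
  also have "\<dots> \<longleftrightarrow> v \<in> {b..<b+6} - {u}" using bb by auto
  finally show ?thesis unfolding b_def .
qed

lemma H_small: "u < n0 \<Longrightarrow> Hx n0 nb n u v \<longleftrightarrow> v \<in> set (nb u)"
  unfolding Hx_def by auto

lemma H_ge: "Hx n0 nb n u v \<Longrightarrow> n0 \<le> u \<Longrightarrow> n0 \<le> v \<and> (u - n0) div 6 = (v - n0) div 6"
  unfolding Hx_def by auto

lemma good_full:
  assumes gc: "goodchk n0 nb"
    and u: "u < n" and x: "x < n" and ux: "u \<noteq> x" "\<not> Hx n0 nb n u x"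
    and y: "Hx n0 nb n u y" "\<not> Hx n0 nb n x y"
  shows "\<exists>y2. y2 \<noteq> y \<and> Hx n0 nb n u y2 \<and> \<not> Hx n0 nb n x y2"
proof (cases "u < n0")
  case True
  note uT = True
  show ?thesis
  proof (cases "x < n0")
    case True
    have "x \<notin> set (nb u)" using ux uT H_small by blast
    moreover have "y \<in> set (nb u)" "y \<notin> set (nb x)" using y uT True H_small by blast+
    ultimately obtain y2 where "y2 \<in> set (nb u)" "y2 \<noteq> y" "y2 \<notin> set (nb x)"
      using gc[unfolded goodchk_def, rule_format, OF uT True ux(1)] by blast
    thus ?thesis using uT True H_small by blast
  next
    case False
    have c5: "card (set (nb u)) = 5" using ok uT unfolding nbok_def by (simp add: distinct_card)
    have "set (nb u) - {y} \<noteq> {}"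
    proof
      assume "set (nb u) - {y} = {}"
      hence "set (nb u) \<subseteq> {y}" by blast
      hence "card (set (nb u)) \<le> 1" using card_mono[of "{y}"] by fastforce
      thus False using c5 by simp
    qed
    then obtain y2 where y2: "y2 \<in> set (nb u)" "y2 \<noteq> y" by blast
    have "y2 < n0" using nb_lt uT y2 by blast
    hence "\<not> Hx n0 nb n x y2" using H_ge False by force
    thus ?thesis using y2 uT H_small by blast
  qed
next
  case False
  define b where "b = n0 + 6 * ((u - n0) div 6)"
  have Hu: "Hx n0 nb n u v \<longleftrightarrow> v \<in> {b..<b+6} - {u}" for v using H_block[of u v] False u b_def by simp
  have "card ({b..<b+6} - {u,y}) \<ge> 4"
  proof -
    have "card {b..<b+6} = 6" by simp
    moreover have "card ({b..<b+6} - {u,y}) \<ge> card {b..<b+6} - card {u,y}" by (rule diff_card_le_card_Diff) simp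
    moreover have "card {u,y} \<le> 2" by (simp add: card_insert_le_m1)
    ultimately show ?thesis by linarith
  qed
  hence "{b..<b+6} - {u,y} \<noteq> {}" by (metis card.empty not_numeral_le_zero)
  then obtain y2 where y2: "y2 \<in> {b..<b+6}" "y2 \<noteq> u" "y2 \<noteq> y" by blast
  have Huy2: "Hx n0 nb n u y2" using Hu y2 by blast
  have "\<not> Hx n0 nb n x y2"
  proof
    assume hx: "Hx n0 nb n x y2"
    show False
    proof (cases "x < n0")
      case True
      hence "y2 < n0" using hx H_small nb_lt by blast
      moreover have "n0 \<le> y2" using y2 b_def by simp
      ultimately show False by simp
    next
      case xF: False
      have "n0 \<le> y2 \<and> (x - n0) div 6 = (y2 - n0) div 6" using H_ge[OF hx] xF by simp
      moreover have "n0 \<le> y2 \<and> (u - n0) div 6 = (y2 - n0) div 6"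
        using block_iff[of u y2] False y2 b_def by simp
      ultimately have "x \<in> {b..<b+6}" using block_iff[of u x] False xF b_def by simp
      thus False using Hu ux by blast
    qed
  qed
  thus ?thesis using Huy2 y2 by blast
qed

lemma zf_lower:
  assumes gc: "goodchk n0 nb" and zf: "zero_forcing_set n (Gx n0 nb n) S"
  shows "n - 6 < card S"
proof (rule ccontr)
  assume "\<not> n - 6 < card S"
  hence cS: "card S \<le> n - 6" by simp
  have Sn: "S \<subseteq> {..<n}" and allb: "\<And>v. v < n \<Longrightarrow> blue n (Gx n0 nb n) S v"
    using zf unfolding zero_forcing_set_def by auto
  have finS: "finite S" using Sn finite_subset by blast
  let ?G = "Gx n0 nb n"
  let ?H = "Hx n0 nb n"
  show False
  proof (cases "\<exists>u v. u \<in> S \<and> v < n \<and> v \<notin> S \<and> ?G u v \<and> (\<forall>w. w < n \<and> ?G u w \<and> w \<noteq> v \<longrightarrow> w \<in> S)")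
    case True
    then obtain u v where uv: "u \<in> S" "v < n" "v \<notin> S" "?G u v"
      and rest: "\<forall>w. w < n \<and> ?G u w \<and> w \<noteq> v \<longrightarrow> w \<in> S" by blast
    have un: "u < n" using uv Sn by auto
    define N where "N = {w. w < n \<and> ?G u w}"
    have cN: "card N = n - 6" using G_card[OF un] N_def by simp
    have finN: "finite N" unfolding N_def by simp
    have vN: "v \<in> N" using uv N_def by simp
    have uN: "u \<notin> N" unfolding N_def Gx_def by simp
    have XS: "insert u (N - {v}) \<subseteq> S" using rest uv N_def by auto
    have cX: "card (insert u (N - {v})) = n - 6"
    proof -
      have "card (N - {v}) = n - 7" using cN vN finN by simp
      moreover have "n - 6 \<ge> 1" using n0ge n0n by simp
      ultimately show ?thesis using uN finN by simp
    qed
    have SX: "S = insert u (N - {v})"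
      using card_subset_eq[OF finS XS] cX cS card_mono[OF finS XS] by simp
    define T where "T = insert u N"
    have ST: "S \<subseteq> T" using SX T_def by auto
    have blueT: "blue n ?G S w \<Longrightarrow> w \<in> T" for w
    proof (induction rule: blue.induct)
      case (init v)
      then show ?case using ST by blast
    next
      case (force u' v')
      show ?case
      proof (rule ccontr)
        assume vT: "v' \<notin> T"
        have v'u: "v' \<noteq> u" using vT T_def by simp
        have "\<not> ?G u v'" using vT T_def N_def force by simp
        hence Huv: "?H u v'" using un force v'u unfolding Gx_def by simp
        have u'u: "u' \<noteq> u"
        proof
          assume "u' = u"
          hence "v' \<in> N" using force N_def by simp
          thus False using vT T_def by simp
        qed
        hence "u' \<in> N" using force T_def by simp
        hence Gu: "?G u u'" using N_def by simp
        hence nHuu: "\<not> ?H u u'" and uu': "u \<noteq> u'" unfolding Gx_def by auto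
        have nH: "\<not> ?H u' v'" using force unfolding Gx_def by simp
        obtain y2 where y2: "y2 \<noteq> v'" "?H u y2" "\<not> ?H u' y2"
          using good_full[OF gc un force(1) uu' nHuu Huv nH] by blast
        have y2n: "y2 < n" using H_lt y2 by blast
        have "y2 \<noteq> u'" using y2 nHuu by blast
        hence "?G u' y2" using y2 y2n force(1) unfolding Gx_def by simp
        hence "y2 \<in> T" using force(6) y2(1) y2n by blast
        moreover have "y2 \<noteq> u" using y2 H_irrefl by blast
        moreover have "\<not> ?G u y2" using y2 unfolding Gx_def by simp
        ultimately show False unfolding T_def N_def by simp
      qed
    qed
    have "card T = n - 5" using cN uN finN T_def n0ge n0n by simp
    hence "\<not> {..<n} \<subseteq> T" using card_mono[of T "{..<n}"] finN T_def n0ge by auto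
    then obtain z where "z < n" "z \<notin> T" by auto
    thus False using allb blueT by blast
  next
    case False
    have blueS: "blue n ?G S w \<Longrightarrow> w \<in> S" for w
    proof (induction rule: blue.induct)
      case (init v)
      then show ?case by simp
    next
      case (force u' v')
      show ?case
      proof (rule ccontr)
        assume nv: "v' \<notin> S"
        have "\<forall>w. w < n \<and> ?G u' w \<and> w \<noteq> v' \<longrightarrow> w \<in> S" using force(6) by blast
        hence "u' \<in> S \<and> v' < n \<and> v' \<notin> S \<and> ?G u' v' \<and> (\<forall>w. w < n \<and> ?G u' w \<and> w \<noteq> v' \<longrightarrow> w \<in> S)"
          using force(2,4,5) nv by blast
        thus False using False by blast
      qed
    qed
    have "{..<n} \<subseteq> S" using allb blueS by blast
    hence "card {..<n} \<le> card S" by (rule card_mono[OF finS])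
    hence "n \<le> card S" by simp
    thus False using cS n0ge n0n by simp
  qed
qed

end
end


definition forcechk :: "nat \<Rightarrow> (nat \<Rightarrow> nat list) \<Rightarrow> (nat \<times> nat) list \<Rightarrow> bool" where
  "forcechk n0 nb sq \<longleftrightarrow> length sq = 6 \<and> distinct (map snd sq) \<and>
     (\<forall>i<6. fst (sq!i) < n0 \<and> snd (sq!i) < n0 \<and> fst (sq!i) \<notin> set (drop i (map snd sq)) \<and>
        fst (sq!i) \<noteq> snd (sq!i) \<and> snd (sq!i) \<notin> set (nb (fst (sq!i))) \<and>
        (\<forall>z\<in>set (drop i (map snd sq)). z \<noteq> snd (sq!i) \<longrightarrow> z \<in> set (nb (fst (sq!i)))))"

context frame
begin

context
  fixes nb assumes ok: "nbok n0 nb"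
begin

lemma zf_upper:
  assumes fc: "forcechk n0 nb sq"
  defines "Wl \<equiv> map snd sq"
  shows "zero_forcing_set n (Gx n0 nb n) ({..<n} - set Wl) \<and> card ({..<n} - set Wl) = n - 6"
proof -
  let ?G = "Gx n0 nb n"
  let ?S = "{..<n} - set Wl"
  have len: "length Wl = 6" and dist: "distinct Wl" using fc unfolding forcechk_def Wl_def by auto
  have st: "\<And>i. i < 6 \<Longrightarrow> fst (sq!i) < n0 \<and> Wl!i < n0 \<and> fst (sq!i) \<notin> set (drop i Wl) \<and>
        fst (sq!i) \<noteq> Wl!i \<and> Wl!i \<notin> set (nb (fst (sq!i))) \<and>
        (\<forall>z\<in>set (drop i Wl). z \<noteq> Wl!i \<longrightarrow> z \<in> set (nb (fst (sq!i))))"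
    using fc len unfolding forcechk_def Wl_def by auto
  have Wn: "set Wl \<subseteq> {..<n}"
  proof
    fix z assume "z \<in> set Wl"
    then obtain i where "i < 6" "z = Wl!i" using len by (metis in_set_conv_nth)
    thus "z \<in> {..<n}" using st n0n by fastforce
  qed
  have helper: "blue n ?G ?S z" if "z < n" "z \<notin> set (drop i Wl)" "\<forall>p<i. blue n ?G ?S (Wl!p)" for z i
  proof (cases "z \<in> set Wl")
    case False
    thus ?thesis using that by (intro blue.init) simp
  next
    case True
    then obtain p where p: "p < length Wl" "z = Wl!p" by (metis in_set_conv_nth)
    have "p < i"
    proof (rule ccontr)
      assume "\<not> p < i"
      hence "drop i Wl ! (p - i) = Wl ! p" "p - i < length (drop i Wl)" using p by auto
      hence "z \<in> set (drop i Wl)" using p by (metis nth_mem)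
      thus False using that by simp
    qed
    thus ?thesis using that p by blast
  qed
  have allW: "\<forall>p<i. blue n ?G ?S (Wl!p)" if "i \<le> 6" for i
    using that
  proof (induction i)
    case 0
    then show ?case by simp
  next
    case (Suc i)
    hence IH: "\<forall>p<i. blue n ?G ?S (Wl!p)" and i6: "i < 6" by auto
    define a where "a = fst (sq!i)"
    have sti: "a < n0" "Wl!i < n0" "a \<notin> set (drop i Wl)" "a \<noteq> Wl!i" "Wl!i \<notin> set (nb a)"
      "\<forall>z\<in>set (drop i Wl). z \<noteq> Wl!i \<longrightarrow> z \<in> set (nb a)"
      using st[OF i6] a_def by auto
    have an: "a < n" "Wl!i < n" using sti n0n by auto
    have ba: "blue n ?G ?S a" using helper[OF an(1) sti(3) IH] .
    have Gaw: "?G a (Wl!i)" using sti an H_small[OF ok] unfolding Gx_def by simp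
    have others: "\<forall>w. w < n \<and> ?G a w \<and> w \<noteq> Wl!i \<longrightarrow> blue n ?G ?S w"
    proof (intro allI impI)
      fix w assume w: "w < n \<and> ?G a w \<and> w \<noteq> Wl!i"
      hence "w \<notin> set (nb a)" using sti H_small[OF ok] unfolding Gx_def by simp
      hence "w \<notin> set (drop i Wl)" using sti w by blast
      thus "blue n ?G ?S w" using helper w IH by blast
    qed
    have "blue n ?G ?S (Wl!i)" by (rule blue.force[OF an ba Gaw others])
    thus ?case using IH less_Suc_eq by auto
  qed
  have zf: "zero_forcing_set n ?G ?S"
    unfolding zero_forcing_set_def
  proof (intro conjI allI impI)
    show "?S \<subseteq> {..<n}" by blast
    fix v assume v: "v < n"
    show "blue n ?G ?S v"
    proof (cases "v \<in> set Wl")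
      case True
      then obtain p where "p < 6" "v = Wl!p" using len by (metis in_set_conv_nth)
      thus ?thesis using allW[of 6] by simp
    next
      case False
      thus ?thesis using v by (intro blue.init) simp
    qed
  qed
  have "card (set Wl) = 6" using dist len distinct_card by metis
  hence "card ?S = n - 6" using card_Diff_subset[OF _ Wn] by simp
  thus ?thesis using zf by simp
qed

end
end


definition cr :: "nat \<Rightarrow> real" where "cr j = (if j < 4 then -1 else 1)"
definition qv :: "nat \<Rightarrow> nat \<Rightarrow> real" where
  "qv l j = (if l = j then cr j else 0) + (if l < 4 \<and> j < 4 then 1/2 else 0)"
definition qm :: "nat \<Rightarrow> real mat" where "qm n = mat n n (\<lambda>(l,j). qv l j)"
definition ee :: "(nat \<Rightarrow> nat list) \<Rightarrow> nat \<Rightarrow> nat \<Rightarrow> real" where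
  "ee nb i j = (if i \<noteq> j \<and> j \<notin> set (nb i) then 1 else 0)"
definition swchk :: "nat \<Rightarrow> (nat \<Rightarrow> nat list) \<Rightarrow> (nat \<Rightarrow> nat list) \<Rightarrow> bool" where
  "swchk n0 nb nb' \<longleftrightarrow> (\<forall>i<n0. \<forall>j<n0.
     ee nb i j * cr j + (if j < 4 then (ee nb i 0 + ee nb i 1 + ee nb i 2 + ee nb i 3) / 2 else 0) =
     cr i * ee nb' i j + (if i < 4 then (ee nb' 0 j + ee nb' 1 j + ee nb' 2 j + ee nb' 3 j) / 2 else 0))"

lemma sum4:
  fixes g :: "nat \<Rightarrow> real"
  assumes "4 \<le> n"
  shows "(\<Sum>l\<in>{0..<n}. (if l < 4 then g l else 0)) = g 0 + g 1 + g 2 + g 3"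
proof -
  have "(\<Sum>l\<in>{0..<n}. (if l < 4 then g l else 0)) =
      (\<Sum>l\<in>{0..<4}. (if l < 4 then g l else 0)) + (\<Sum>l\<in>{4..<n}. (if l < 4 then g l else 0))"
    by (rule sum.atLeastLessThan_concat[symmetric]) (use assms in auto)
  also have "(\<Sum>l\<in>{4..<n}. (if l < 4 then g l else 0)) = 0" by (intro sum.neutral) auto
  also have "(\<Sum>l\<in>{0..<4}. (if l < 4 then g l else 0)) = g 0 + g 1 + g 2 + g 3"
    by (simp add: numeral_eq_Suc)
  finally show ?thesis by simp
qed

lemma sumq_right:
  fixes f :: "nat \<Rightarrow> real"
  assumes "j < n" "4 \<le> n"
  shows "(\<Sum>l\<in>{0..<n}. f l * qv l j) = f j * cr j + (if j < 4 then (f 0 + f 1 + f 2 + f 3) / 2 else 0)"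
proof -
  have pw: "f l * qv l j = (if l = j then f j * cr j else 0) + (if l < 4 then (if j < 4 then f l / 2 else 0) else 0)" for l
    unfolding qv_def by (auto simp: algebra_simps)
  have "(\<Sum>l\<in>{0..<n}. f l * qv l j) = (\<Sum>l\<in>{0..<n}. (if l = j then f j * cr j else 0)) +
      (\<Sum>l\<in>{0..<n}. (if l < 4 then (if j < 4 then f l / 2 else 0) else 0))"
    unfolding pw by (rule sum.distrib)
  also have "(\<Sum>l\<in>{0..<n}. (if l = j then f j * cr j else 0)) = f j * cr j" using assms by simp
  also have "(\<Sum>l\<in>{0..<n}. (if l < 4 then (if j < 4 then f l / 2 else 0) else 0)) =
     (if j < 4 then f 0 / 2 else 0) + (if j < 4 then f 1 / 2 else 0) + (if j < 4 then f 2 / 2 else 0) + (if j < 4 then f 3 / 2 else 0)"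
    by (rule sum4[OF assms(2)])
  finally show ?thesis by auto
qed

lemma sumq_left:
  fixes f :: "nat \<Rightarrow> real"
  assumes "i < n" "4 \<le> n"
  shows "(\<Sum>l\<in>{0..<n}. qv i l * f l) = cr i * f i + (if i < 4 then (f 0 + f 1 + f 2 + f 3) / 2 else 0)"
proof -
  have pw: "qv i l * f l = (if l = i then cr i * f i else 0) + (if l < 4 then (if i < 4 then f l / 2 else 0) else 0)" for l
    unfolding qv_def by (auto simp: algebra_simps)
  have "(\<Sum>l\<in>{0..<n}. qv i l * f l) = (\<Sum>l\<in>{0..<n}. (if l = i then cr i * f i else 0)) +
      (\<Sum>l\<in>{0..<n}. (if l < 4 then (if i < 4 then f l / 2 else 0) else 0))"
    unfolding pw by (rule sum.distrib)
  also have "(\<Sum>l\<in>{0..<n}. (if l = i then cr i * f i else 0)) = cr i * f i" using assms by simp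
  also have "(\<Sum>l\<in>{0..<n}. (if l < 4 then (if i < 4 then f l / 2 else 0) else 0)) =
     (if i < 4 then f 0 / 2 else 0) + (if i < 4 then f 1 / 2 else 0) + (if i < 4 then f 2 / 2 else 0) + (if i < 4 then f 3 / 2 else 0)"
    by (rule sum4[OF assms(2)])
  finally show ?thesis by auto
qed

lemma mult_entry:
  fixes A B :: "real mat"
  assumes "A \<in> carrier_mat n n" "B \<in> carrier_mat n n" "i < n" "j < n"
  shows "(A * B) $$ (i,j) = (\<Sum>l\<in>{0..<n}. A $$ (i,l) * B $$ (l,j))"
  using assms by (simp add: scalar_prod_def)

lemma qsum_row: "i < 4 \<Longrightarrow> qv i 0 + qv i 1 + qv i 2 + qv i 3 = 1"
proof -
  assume "i < 4"
  hence "i = 0 \<or> i = 1 \<or> i = 2 \<or> i = 3" by auto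
  thus ?thesis unfolding qv_def cr_def by auto
qed

lemma qsum_row2: "\<not> i < 4 \<Longrightarrow> qv i 0 + qv i 1 + qv i 2 + qv i 3 = 0"
  unfolding qv_def cr_def by auto

lemma qq:
  assumes "4 \<le> n"
  shows "qm n * qm n = 1\<^sub>m n"
proof (rule eq_matI)
  fix i j assume ij: "i < dim_row (1\<^sub>m n :: real mat)" "j < dim_col (1\<^sub>m n :: real mat)"
  hence ij': "i < n" "j < n" by auto
  have "(qm n * qm n) $$ (i,j) = (\<Sum>l\<in>{0..<n}. qv i l * qv l j)"
    using ij' unfolding qm_def by (simp add: scalar_prod_def)
  also have "\<dots> = qv i j * cr j + (if j < 4 then (qv i 0 + qv i 1 + qv i 2 + qv i 3) / 2 else 0)"
    by (rule sumq_right[OF ij'(2) assms])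
  also have "\<dots> = (if i = j then 1 else 0)"
    using qsum_row[of i] qsum_row2[of i] unfolding qv_def cr_def by (auto split: if_splits)
  finally show "(qm n * qm n) $$ (i,j) = 1\<^sub>m n $$ (i,j)" using ij' by simp
qed (auto simp: qm_def)

context frame
begin

lemma H_far:
  assumes ok: "nbok n0 nb" and "n0 \<le> i \<or> n0 \<le> j"
  shows "Hx n0 nb n i j = (n0 \<le> i \<and> n0 \<le> j \<and> i < n \<and> j < n \<and> i \<noteq> j \<and> (i - n0) div 6 = (j - n0) div 6)"
  using assms nb_lt[OF ok, of i j] unfolding Hx_def by auto

lemma ent_small:
  assumes ok: "nbok n0 nb" and "i < n0" "j < n0"
  shows "(if Gx n0 nb n i j then 1 else 0) = ee nb i j"
  using assms n0n H_small[OF ok, of i j] unfolding Gx_def ee_def by auto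

lemma cospec:
  assumes ok: "nbok n0 nb" and ok': "nbok n0 nb'" and sw: "swchk n0 nb nb'"
  shows "cospectral n (Gx n0 nb n) n (Gx n0 nb' n)"
proof -
  let ?G = "Gx n0 nb n" and ?F = "Gx n0 nb' n"
  define AG where "AG = adj_matrix n ?G"
  define AF where "AF = adj_matrix n ?F"
  define Q where "Q = qm n"
  have n4: "4 \<le> n" using n0n n0ge by simp
  have car: "AG \<in> carrier_mat n n" "AF \<in> carrier_mat n n" "Q \<in> carrier_mat n n"
    unfolding AG_def AF_def Q_def qm_def adj_matrix_def by auto
  define eG where "eG i j = (if ?G i j then 1 else (0::real))" for i j
  define eF where "eF i j = (if ?F i j then 1 else (0::real))" for i j
  have eq: "AG * Q = Q * AF"
  proof (rule eq_matI)
    fix i j assume "i < dim_row (Q * AF)" "j < dim_col (Q * AF)"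
    hence ij: "i < n" "j < n" using car by auto
    have "(AG * Q) $$ (i,j) = (\<Sum>l\<in>{0..<n}. eG i l * qv l j)"
      using ij car unfolding mult_entry[OF car(1,3) ij]
      by (intro sum.cong refl) (simp add: AG_def adj_matrix_def Q_def qm_def eG_def)
    also have "\<dots> = eG i j * cr j + (if j < 4 then (eG i 0 + eG i 1 + eG i 2 + eG i 3) / 2 else 0)"
      by (rule sumq_right[OF ij(2) n4])
    finally have L: "(AG * Q) $$ (i,j) = eG i j * cr j + (if j < 4 then (eG i 0 + eG i 1 + eG i 2 + eG i 3) / 2 else 0)" .
    have "(Q * AF) $$ (i,j) = (\<Sum>l\<in>{0..<n}. qv i l * eF l j)"
      using ij car unfolding mult_entry[OF car(3,2) ij]
      by (intro sum.cong refl) (simp add: AF_def adj_matrix_def Q_def qm_def eF_def)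
    also have "\<dots> = cr i * eF i j + (if i < 4 then (eF 0 j + eF 1 j + eF 2 j + eF 3 j) / 2 else 0)"
      by (rule sumq_left[OF ij(1) n4])
    finally have R: "(Q * AF) $$ (i,j) = cr i * eF i j + (if i < 4 then (eF 0 j + eF 1 j + eF 2 j + eF 3 j) / 2 else 0)" .
    show "(AG * Q) $$ (i,j) = (Q * AF) $$ (i,j)"
    proof (cases "i < n0 \<and> j < n0")
      case True
      have rG: "\<And>a b. a < n0 \<Longrightarrow> b < n0 \<Longrightarrow> eG a b = ee nb a b"
        unfolding eG_def using ent_small[OF ok] by simp
      have rF: "\<And>a b. a < n0 \<Longrightarrow> b < n0 \<Longrightarrow> eF a b = ee nb' a b"
        unfolding eF_def using ent_small[OF ok'] by simp
      have inst: "ee nb i j * cr j + (if j < 4 then (ee nb i 0 + ee nb i 1 + ee nb i 2 + ee nb i 3) / 2 else 0) =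
          cr i * ee nb' i j + (if i < 4 then (ee nb' 0 j + ee nb' 1 j + ee nb' 2 j + ee nb' 3 j) / 2 else 0)"
        using sw True unfolding swchk_def by blast
      have lt: "0 < n0" "1 < n0" "2 < n0" "3 < n0" using n0ge by auto
      have "eG i j * cr j + (if j < 4 then (eG i 0 + eG i 1 + eG i 2 + eG i 3) / 2 else 0) =
          cr i * eF i j + (if i < 4 then (eF 0 j + eF 1 j + eF 2 j + eF 3 j) / 2 else 0)"
        unfolding rG[OF True[THEN conjunct1] True[THEN conjunct2]] rF[OF True[THEN conjunct1] True[THEN conjunct2]]
          rG[OF True[THEN conjunct1] lt(1)] rG[OF True[THEN conjunct1] lt(2)] rG[OF True[THEN conjunct1] lt(3)] rG[OF True[THEN conjunct1] lt(4)]
          rF[OF lt(1) True[THEN conjunct2]] rF[OF lt(2) True[THEN conjunct2]] rF[OF lt(3) True[THEN conjunct2]] rF[OF lt(4) True[THEN conjunct2]]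
        by (rule inst)
      thus ?thesis using L R by simp
    next
      case False
      have Geq: "?G a b = ?F a b" if "n0 \<le> a \<or> n0 \<le> b" for a b
        using H_far[OF ok that] H_far[OF ok' that] unfolding Gx_def by simp
      have eGF: "eG a b = eF a b" if "n0 \<le> a \<or> n0 \<le> b" for a b
        using Geq[OF that] unfolding eG_def eF_def by simp
      show ?thesis
      proof (cases "n0 \<le> i")
        case True
        have e1: "eG i t = 1" if "t < 4" for t
          using H_far[OF ok, of i t] True that ij n0ge unfolding eG_def Gx_def by auto
        have "eG i j = eF i j" using eGF True by simp
        moreover have "cr i = 1" using True n0ge unfolding cr_def by simp
        moreover have "j < 4 \<Longrightarrow> eG i j = 1" using e1 by simp
        ultimately show ?thesis using L R e1 True n0ge unfolding cr_def by auto
      next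
        case iF: False
        hence jb: "n0 \<le> j" using False by simp
        have e1: "eF t j = 1" if "t < n0" for t
          using H_far[OF ok', of t j] jb that ij n0ge unfolding eF_def Gx_def by auto
        have "eG i j = eF i j" using eGF jb by simp
        moreover have "cr j = 1" using jb n0ge unfolding cr_def by simp
        moreover have "eF i j = 1" using e1 iF by simp
        ultimately show ?thesis using L R e1[of 0] e1[of 1] e1[of 2] e1[of 3] jb n0ge iF unfolding cr_def by auto
      qed
    qed
  qed (use car in auto)
  have QQ: "Q * Q = 1\<^sub>m n" unfolding Q_def by (rule qq[OF n4])
  have "Q * AF * Q = AG * Q * Q" using eq by simp
  also have "\<dots> = AG * (Q * Q)" using car by (simp add: assoc_mult_mat[of AG n n Q n Q n])
  also have "\<dots> = AG" using QQ car by simp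
  finally have "AG = Q * AF * Q" by simp
  hence "similar_mat AG AF" using car QQ by (intro similar_matI[of AG AF Q Q n]) auto
  hence "char_poly AG = char_poly AF" by (rule char_poly_similar)
  thus ?thesis unfolding cospectral_def AG_def AF_def .
qed

end


definition en :: "(nat \<Rightarrow> nat list) \<Rightarrow> nat \<Rightarrow> nat \<Rightarrow> nat" where
  "en nb i j = (if i \<noteq> j \<and> j \<notin> set (nb i) then 1 else 0)"
definition swchkn :: "nat \<Rightarrow> (nat \<Rightarrow> nat list) \<Rightarrow> (nat \<Rightarrow> nat list) \<Rightarrow> bool" where
  "swchkn n0 nb nb' \<longleftrightarrow> (\<forall>i<n0. \<forall>j<n0.
     (if j < 4 then en nb i 0 + en nb i 1 + en nb i 2 + en nb i 3 else 2 * en nb i j) + (if i < 4 then 2 * en nb' i j else 0) =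
     (if i < 4 then en nb' 0 j + en nb' 1 j + en nb' 2 j + en nb' 3 j else 2 * en nb' i j) + (if j < 4 then 2 * en nb i j else 0))"

lemma swchk_of_nat:
  assumes "swchkn n0 nb nb'"
  shows "swchk n0 nb nb'"
  unfolding swchk_def
proof (intro allI impI)
  fix i j assume ij: "i < n0" "j < n0"
  have e: "ee nb a b = real (en nb a b)" "ee nb' a b = real (en nb' a b)" for a b
    unfolding ee_def en_def by auto
  have h: "(if j < 4 then en nb i 0 + en nb i 1 + en nb i 2 + en nb i 3 else 2 * en nb i j) + (if i < 4 then 2 * en nb' i j else 0) =
     (if i < 4 then en nb' 0 j + en nb' 1 j + en nb' 2 j + en nb' 3 j else 2 * en nb' i j) + (if j < 4 then 2 * en nb i j else 0)"
    using assms ij unfolding swchkn_def by blast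
  hence h': "real ((if j < 4 then en nb i 0 + en nb i 1 + en nb i 2 + en nb i 3 else 2 * en nb i j) + (if i < 4 then 2 * en nb' i j else 0)) =
     real ((if i < 4 then en nb' 0 j + en nb' 1 j + en nb' 2 j + en nb' 3 j else 2 * en nb' i j) + (if j < 4 then 2 * en nb i j else 0))"
    by simp
  show "ee nb i j * cr j + (if j < 4 then (ee nb i 0 + ee nb i 1 + ee nb i 2 + ee nb i 3) / 2 else 0) =
     cr i * ee nb' i j + (if i < 4 then (ee nb' 0 j + ee nb' 1 j + ee nb' 2 j + ee nb' 3 j) / 2 else 0)"
    unfolding e cr_def using h' by (cases "i < 4"; cases "j < 4") (simp_all add: field_simps)
qed

lemma main_gen:
  assumes fr: "frame n0 n" and ok: "nbok n0 nb" and ok': "nbok n0 nb'" and gc: "goodchk n0 nb"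
    and sw: "swchk n0 nb nb'" and fc: "forcechk n0 nb' sq" and nk: "n = 2 * k + 6"
  shows "\<exists>n E m F. simple_graph n E \<and> simple_graph m F \<and>
           regular n E (2 * k) \<and> regular m F (2 * k) \<and>
           cospectral n E m F \<and>
           zero_forcing_number n E \<noteq> zero_forcing_number m F"
proof -
  interpret frame n0 n by (rule fr)
  let ?G = "Gx n0 nb n" and ?F = "Gx n0 nb' n"
  have d: "n - 6 = 2 * k" using nk by simp
  have exG: "\<exists>k. \<exists>S. zero_forcing_set n ?G S \<and> card S = k"
    by (rule exI[of _ n], rule exI[of _ "{..<n}"]) (auto simp: zero_forcing_set_def intro: blue.init)
  obtain S0 where S0: "zero_forcing_set n ?G S0" "card S0 = zero_forcing_number n ?G"
    using LeastI_ex[OF exG] unfolding zero_forcing_number_def by blast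
  have zG: "n - 6 < zero_forcing_number n ?G" using zf_lower[OF ok gc S0(1)] S0(2) by simp
  obtain S1 where S1: "zero_forcing_set n ?F S1" "card S1 = n - 6"
    using zf_upper[OF ok' fc] by blast
  have zF: "zero_forcing_number n ?F \<le> n - 6"
    unfolding zero_forcing_number_def using S1 by (intro Least_le) blast
  show ?thesis
    apply (rule exI[of _ n], rule exI[of _ ?G], rule exI[of _ n], rule exI[of _ ?F])
    using simple_G[OF ok] simple_G[OF ok'] regular_G[OF ok] regular_G[OF ok'] cospec[OF ok ok' sw] zG zF d
    by auto
qed


definition nbA :: "nat \<Rightarrow> nat list" where
  "nbA u = [[2, 3, 4, 5, 9], [2, 3, 6, 8, 9], [0, 1, 4, 6, 7], [0, 1, 5, 7, 8], [0, 2, 5, 8, 9], [0, 3, 4, 6, 8], [1, 2, 5, 7, 9], [2, 3, 6, 8, 9], [1, 3, 4, 5, 7], [0, 1, 4, 6, 7]] ! u"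
definition nbA' :: "nat \<Rightarrow> nat list" where
  "nbA' u = [[2, 3, 6, 7, 8], [2, 3, 4, 5, 7], [0, 1, 5, 8, 9], [0, 1, 4, 6, 9], [1, 3, 5, 8, 9], [1, 2, 4, 6, 8], [0, 3, 5, 7, 9], [0, 1, 6, 8, 9], [0, 2, 4, 5, 7], [2, 3, 4, 6, 7]] ! u"
definition sqA :: "(nat \<times> nat) list" where "sqA = [(3, 5), (7, 4), (2, 6), (4, 0), (5, 9), (0, 1)]"

lemma A1: "nbok 10 nbA" unfolding nbok_def nbA_def by (simp add: numeral_eq_Suc All_less_Suc)
lemma A2: "nbok 10 nbA'" unfolding nbok_def nbA'_def by (simp add: numeral_eq_Suc All_less_Suc)
lemma A3: "goodchk 10 nbA" unfolding goodchk_def nbA_def by (simp add: numeral_eq_Suc All_less_Suc)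
lemma A4: "forcechk 10 nbA' sqA" unfolding forcechk_def nbA'_def sqA_def by (simp add: numeral_eq_Suc All_less_Suc)
lemma A5: "swchk 10 nbA nbA'"
  by (rule swchk_of_nat) (unfold swchkn_def en_def nbA_def nbA'_def, simp add: numeral_eq_Suc All_less_Suc)

definition nbB :: "nat \<Rightarrow> nat list" where
  "nbB u = [[3, 4, 6, 9, 10], [2, 4, 5, 8, 11], [1, 5, 7, 8, 9], [0, 6, 7, 10, 11], [0, 1, 6, 7, 8], [1, 2, 8, 9, 10], [0, 3, 4, 7, 9], [2, 3, 4, 6, 11], [1, 2, 4, 5, 10], [0, 2, 5, 6, 11], [0, 3, 5, 8, 11], [1, 3, 7, 9, 10]] ! u"
definition nbB' :: "nat \<Rightarrow> nat list" where
  "nbB' u = [[3, 5, 7, 8, 11], [2, 6, 7, 9, 10], [1, 4, 6, 10, 11], [0, 4, 5, 8, 9], [2, 3, 6, 7, 8], [0, 3, 8, 9, 10], [1, 2, 4, 7, 9], [0, 1, 4, 6, 11], [0, 3, 4, 5, 10], [1, 3, 5, 6, 11], [1, 2, 5, 8, 11], [0, 2, 7, 9, 10]] ! u"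
definition sqB :: "(nat \<times> nat) list" where "sqB = [(7, 5), (2, 0), (9, 4), (10, 6), (0, 1), (1, 11)]"

lemma B1: "nbok 12 nbB" unfolding nbok_def nbB_def by (simp add: numeral_eq_Suc All_less_Suc)
lemma B2: "nbok 12 nbB'" unfolding nbok_def nbB'_def by (simp add: numeral_eq_Suc All_less_Suc)
lemma B3: "goodchk 12 nbB" unfolding goodchk_def nbB_def by (simp add: numeral_eq_Suc All_less_Suc)
lemma B4: "forcechk 12 nbB' sqB" unfolding forcechk_def nbB'_def sqB_def by (simp add: numeral_eq_Suc All_less_Suc)
lemma B5: "swchk 12 nbB nbB'"
  by (rule swchk_of_nat) (unfold swchkn_def en_def nbB_def nbB'_def, simp add: numeral_eq_Suc All_less_Suc)

definition nbC :: "nat \<Rightarrow> nat list" where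
  "nbC u = [[1, 4, 6, 11, 13], [0, 4, 9, 10, 11], [3, 7, 8, 9, 13], [2, 6, 7, 8, 10], [0, 1, 5, 11, 12], [4, 8, 9, 11, 12], [0, 3, 7, 8, 10], [2, 3, 6, 12, 13], [2, 3, 5, 6, 10], [1, 2, 5, 12, 13], [1, 3, 6, 8, 13], [0, 1, 4, 5, 12], [4, 5, 7, 9, 11], [0, 2, 7, 9, 10]] ! u"
definition nbC' :: "nat \<Rightarrow> nat list" where
  "nbC' u = [[1, 7, 8, 9, 10], [0, 6, 7, 8, 13], [3, 4, 6, 10, 11], [2, 4, 9, 11, 13], [2, 3, 5, 11, 12], [4, 8, 9, 11, 12], [1, 2, 7, 8, 10], [0, 1, 6, 12, 13], [0, 1, 5, 6, 10], [0, 3, 5, 12, 13], [0, 2, 6, 8, 13], [2, 3, 4, 5, 12], [4, 5, 7, 9, 11], [1, 3, 7, 9, 10]] ! u"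
definition sqC :: "(nat \<times> nat) list" where "sqC = [(1, 4), (10, 7), (7, 8), (8, 13), (2, 0), (0, 6)]"

lemma C1: "nbok 14 nbC" unfolding nbok_def nbC_def by (simp add: numeral_eq_Suc All_less_Suc)
lemma C2: "nbok 14 nbC'" unfolding nbok_def nbC'_def by (simp add: numeral_eq_Suc All_less_Suc)
lemma C3: "goodchk 14 nbC" unfolding goodchk_def nbC_def by (simp add: numeral_eq_Suc All_less_Suc)
lemma C4: "forcechk 14 nbC' sqC" unfolding forcechk_def nbC'_def sqC_def by (simp add: numeral_eq_Suc All_less_Suc)
lemma C5: "swchk 14 nbC nbC'"
  by (rule swchk_of_nat) (unfold swchkn_def en_def nbC_def nbC'_def, simp add: numeral_eq_Suc All_less_Suc)

theorem theorem5p3: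
  fixes k :: nat
  assumes "k \<ge> 2"
  shows "\<exists>n E m F. simple_graph n E \<and> simple_graph m F \<and>
           regular n E (2 * k) \<and> regular m F (2 * k) \<and>
           cospectral n E m F \<and>
           zero_forcing_number n E \<noteq> zero_forcing_number m F"
proof -
  define q where "q = k div 3"
  have kq: "k = 3 * q + k mod 3" unfolding q_def by simp
  have "k mod 3 < 3" by simp
  hence dis: "k mod 3 = 0 \<or> k mod 3 = 1 \<or> k mod 3 = 2" by linarith
  have H2: ?thesis if r: "k mod 3 = 2"
  proof -
    have fr: "frame 10 (10 + 6 * q)" by unfold_locales auto
    have "10 + 6 * q = 2 * k + 6" using kq r by simp
    thus ?thesis by (rule main_gen[OF fr A1 A2 A3 A5 A4])
  qed
  have H0: ?thesis if r: "k mod 3 = 0"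
  proof -
    have q1: "1 \<le> q" using r kq assms by simp
    have fr: "frame 12 (12 + 6 * (q - 1))" by unfold_locales auto
    have "12 + 6 * (q - 1) = 2 * k + 6" using kq r q1 by simp
    thus ?thesis by (rule main_gen[OF fr B1 B2 B3 B5 B4])
  qed
  have H1: ?thesis if r: "k mod 3 = 1"
  proof -
    have q1: "1 \<le> q" using r kq assms by simp
    have fr: "frame 14 (14 + 6 * (q - 1))" by unfold_locales auto
    have "14 + 6 * (q - 1) = 2 * k + 6" using kq r q1 by simp
    thus ?thesis by (rule main_gen[OF fr C1 C2 C3 C5 C4])
  qed
  from dis show ?thesis
  proof (elim disjE)
    assume "k mod 3 = 0" thus ?thesis by (rule H0)
  next
    assume "k mod 3 = 1" thus ?thesis by (rule H1)
  next
    assume "k mod 3 = 2" thus ?thesis by (rule H2)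
  qed
qed

end
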